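(* For a $*$-ring $R$ the following are equivalent: (1) $R$ is a generalized Rickart $*$-ring; (2) $R$ is a generalized weakly Rickart $*$-ring with unity.
   Context: A $*$-ring is an associative ring $R$ with an involution $x\mapsto x^*$ (additive, $(xy)^*=y^*x^*$, $x^{**}=x$). A projection is an element $e$ with $e=e^*=e^2$. For $a\in R$, $r(a)=\{b\in R: ab=0\}$. $R$ is a generalized Rickart $*$-ring if for every $x\in R$ there exist a positive integer $n$ and a projection $g$ with $r(x^n)=gR$. A projection $e$ is a generalized right projection of $x$ if there exists $n\in\mathbb N$ with $x^ne=x^n$ and, for all $y\in R$, $x^ny=0$ implies $ey=0$. $R$ is a generalized weakly Rickart $*$-ring if every element of $R$ has a generalized right projection. *)

theory Defs
  imports Main
begin

definition star_ring :: "('a::ring \<Rightarrow> 'a) \<Rightarrow> bool" where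
  "star_ring s \<longleftrightarrow>
     (\<forall>x y. s (x + y) = s x + s y) \<and>
     (\<forall>x y. s (x * y) = s y * s x) \<and>
     (\<forall>x. s (s x) = x)"

text \<open>Positive powers x^n (n >= 1) in a possibly non-unital ring; the value at 0 is irrelevant.\<close>
fun rpow :: "'a::ring \<Rightarrow> nat \<Rightarrow> 'a" where
  "rpow x 0 = 0"
| "rpow x (Suc 0) = x"
| "rpow x (Suc (Suc n)) = x * rpow x (Suc n)"

definition projection :: "('a::ring \<Rightarrow> 'a) \<Rightarrow> 'a \<Rightarrow> bool" where
  "projection s e \<longleftrightarrow> e = s e \<and> e = e * e"

definition right_ann :: "'a::ring \<Rightarrow> 'a set" where
  "right_ann a = {b. a * b = 0}"

definition gen_rickart :: "('a::ring \<Rightarrow> 'a) \<Rightarrow> bool" where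
  "gen_rickart s \<longleftrightarrow>
     (\<forall>x. \<exists>n>0. \<exists>g. projection s g \<and> right_ann (rpow x n) = {g * y | y. True})"

definition gen_right_projection :: "('a::ring \<Rightarrow> 'a) \<Rightarrow> 'a \<Rightarrow> 'a \<Rightarrow> bool" where
  "gen_right_projection s e x \<longleftrightarrow> projection s e \<and>
     (\<exists>n>0. rpow x n * e = rpow x n \<and> (\<forall>y. rpow x n * y = 0 \<longrightarrow> e * y = 0))"

definition gen_weakly_rickart :: "('a::ring \<Rightarrow> 'a) \<Rightarrow> bool" where
  "gen_weakly_rickart s \<longleftrightarrow> (\<forall>x. \<exists>e. gen_right_projection s e x)"

end

theory Submission
  imports Defs
begin

lemma rpow_zero_Suc: "rpow (0::'a::ring) (Suc n) = 0"
  by (induction n) auto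

lemma rpow_zero: "n > 0 \<Longrightarrow> rpow (0::'a::ring) n = 0"
  using rpow_zero_Suc by (cases n) auto

lemma star_basics:
  fixes s :: "'a::ring \<Rightarrow> 'a"
  assumes "star_ring s"
  shows "s 0 = 0" "\<And>a. s (- a) = - s a" "\<And>a b. s (a - b) = s a - s b"
proof -
  have add: "\<And>x y. s (x + y) = s x + s y" using assms unfolding star_ring_def by blast
  have "s (0 + 0) = s 0 + s 0" by (rule add)
  thus z: "s 0 = 0" by simp
  show n: "\<And>a. s (- a) = - s a"
  proof -
    fix a
    have "s (a + - a) = s a + s (- a)" by (rule add)
    with z show "s (- a) = - s a" by (simp add: eq_neg_iff_add_eq_0 add.commute)
  qed
  show "\<And>a b. s (a - b) = s a - s b"
  proof -
    fix a b
    have "s (a - b) = s (a + - b)" by simp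
    also have "\<dots> = s a + s (- b)" by (rule add)
    also have "\<dots> = s a - s b" using n by simp
    finally show "s (a - b) = s a - s b" .
  qed
qed

theorem mainTheorem8:
  fixes s :: "'a::ring \<Rightarrow> 'a"
  assumes "star_ring s"
  shows "gen_rickart s \<longleftrightarrow>
           (gen_weakly_rickart s \<and> (\<exists>u::'a. \<forall>x. u * x = x \<and> x * u = x))"
proof
  have mul: "\<And>x y. s (x * y) = s y * s x" and inv: "\<And>x. s (s x) = x"
    using assms unfolding star_ring_def by blast+
  note sb = star_basics[OF assms]
  assume gr: "gen_rickart s"
  obtain n g where n: "n > 0" and g: "projection s g"
    and r: "right_ann (rpow (0::'a) n) = {g * y | y. True}"
    using gr unfolding gen_rickart_def by blast
  have gl: "\<And>y. g * y = y"
  proof -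
    fix y
    have "y \<in> right_ann (rpow (0::'a) n)" by (simp add: right_ann_def rpow_zero[OF n])
    then obtain z where "y = g * z" using r by blast
    moreover have "g * g = g" using g unfolding projection_def by simp
    ultimately show "g * y = y" by (metis mult.assoc)
  qed
  have gr': "\<And>y. y * g = y"
  proof -
    fix y
    have "s (y * g) = s g * s y" by (rule mul)
    also have "\<dots> = s y" using gl g unfolding projection_def by simp
    finally have "s (y * g) = s y" .
    thus "y * g = y" by (metis inv)
  qed
  have unit: "\<exists>u::'a. \<forall>x. u * x = x \<and> x * u = x" using gl gr' by blast
  have sg: "s g = g" using g unfolding projection_def by simp
  have wr: "gen_weakly_rickart s"
    unfolding gen_weakly_rickart_def
  proof
    fix x
    obtain m h where m: "m > 0" and h: "projection s h"
      and rh: "right_ann (rpow x m) = {h * y | y. True}"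
      using gr unfolding gen_rickart_def by blast
    have hh: "h * h = h" and sh: "s h = h" using h unfolding projection_def by simp_all
    have "h = h * h" using hh by simp
    hence "h \<in> {h * y | y. True}" by blast
    hence "h \<in> right_ann (rpow x m)" using rh by simp
    hence xh: "rpow x m * h = 0" by (simp add: right_ann_def)
    have "gen_right_projection s (g - h) x"
      unfolding gen_right_projection_def projection_def
    proof (intro conjI exI[of _ m])
      show "g - h = s (g - h)" using sb(3) sg sh by simp
      have "(g - h) * (g - h) = g * g - h * g - g * h + h * h" by (simp add: algebra_simps)
      thus "g - h = (g - h) * (g - h)" using gl[of g] gr'[of h] gl[of h] hh by simp
      show "m > 0" by (rule m)
      show "rpow x m * (g - h) = rpow x m" using xh gr'[of "rpow x m"] by (simp add: right_diff_distrib)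
      show "\<forall>y. rpow x m * y = 0 \<longrightarrow> (g - h) * y = 0"
      proof (intro allI impI)
        fix y assume "rpow x m * y = 0"
        hence "y \<in> right_ann (rpow x m)" by (simp add: right_ann_def)
        then obtain z where "y = h * z" using rh by blast
        hence "(g - h) * y = (g - h) * h * z" by (simp add: mult.assoc)
        also have "\<dots> = 0" using gl hh by (simp add: left_diff_distrib)
        finally show "(g - h) * y = 0" .
      qed
    qed
    thus "\<exists>e. gen_right_projection s e x" by blast
  qed
  show "gen_weakly_rickart s \<and> (\<exists>u::'a. \<forall>x. u * x = x \<and> x * u = x)" using wr unit by blast
next
  note sb = star_basics[OF assms]
  have mul: "\<And>x y. s (x * y) = s y * s x" and inv: "\<And>x. s (s x) = x"
    using assms unfolding star_ring_def by blast+
  assume "gen_weakly_rickart s \<and> (\<exists>u::'a. \<forall>x. u * x = x \<and> x * u = x)"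
  then obtain u :: 'a where wr: "gen_weakly_rickart s" and ul: "\<And>x. u * x = x" and ur: "\<And>x. x * u = x"
    by blast
  have sul: "s u * y = y" for y
  proof -
    have "s u * y = s u * s (s y)" by (simp add: inv)
    also have "\<dots> = s (s y * u)" by (simp add: mul)
    also have "\<dots> = y" by (simp add: ur inv)
    finally show ?thesis .
  qed
  have su: "s u = u" using sul[of u] ur[of "s u"] by simp
  show "gen_rickart s" unfolding gen_rickart_def
  proof
    fix x
    obtain e n where e: "projection s e" and n: "n > 0" and xe: "rpow x n * e = rpow x n"
      and ann: "\<And>y. rpow x n * y = 0 \<Longrightarrow> e * y = 0"
      using wr unfolding gen_weakly_rickart_def gen_right_projection_def by blast
    have ee: "e * e = e" and se: "s e = e" using e unfolding projection_def by simp_all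
    have "(u - e) * (u - e) = u * u - e * u - u * e + e * e" by (simp add: algebra_simps)
    hence "(u - e) * (u - e) = u - e" using ul[of u] ul[of e] ur[of e] ee by simp
    hence proj: "projection s (u - e)" unfolding projection_def
      using sb(3)[of u e] su se by simp
    have "right_ann (rpow x n) = {(u - e) * y | y. True}"
    proof (intro set_eqI iffI)
      fix y assume "y \<in> right_ann (rpow x n)"
      hence "e * y = 0" using ann by (simp add: right_ann_def)
      hence "y = (u - e) * y" using ul[of y] by (simp add: left_diff_distrib)
      thus "y \<in> {(u - e) * y | y. True}" by blast
    next
      fix y assume "y \<in> {(u - e) * y | y. True}"
      then obtain z where "y = (u - e) * z" by blast
      hence "rpow x n * y = (rpow x n * u - rpow x n * e) * z"
        by (simp add: right_diff_distrib mult.assoc[symmetric])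
      also have "\<dots> = 0" using xe ur[of "rpow x n"] by simp
      finally show "y \<in> right_ann (rpow x n)" by (simp add: right_ann_def)
    qed
    thus "\<exists>n>0. \<exists>g. projection s g \<and> right_ann (rpow x n) = {g * y | y. True}"
      using n proj by blast
  qed
qed

end
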